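(* Let $G$ be a countable group, equipped with a proper left-invariant metric, which is not locally finite. Suppose $E_1,E_2,E_3$ are pairwise disjoint NCC subsets of $G$. Then $G$ acts trivially on at most one of $E_1,E_2,E_3$.
   Context: A group is locally finite if every finite subset is contained in a finite subgroup. A subset $A$ of a metric space $X$ is coarsely clopen if for all $r>0$ there is a bounded $K$ such that no $x\in A\setminus K$, $y\in (X\setminus A)\setminus K$ satisfy $d(x,y)<r$. An NCC set (non-trivial coarsely clopen set) is a coarsely clopen $Y\subset X$ with both $Y$ and $X\setminus Y$ infinite (in a group with proper metric: unbounded). $G$ acts trivially on an NCC set $E\subset G$ if the symmetric difference $E\,\Delta\,(g\cdot E)$ is finite for every $g\in G$. *)

theory Defs
  imports "HOL-Algebra.Algebra"
begin

definition metric_on :: "'a set \<Rightarrow> ('a \<Rightarrow> 'a \<Rightarrow> real) \<Rightarrow> bool" where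
  "metric_on S d \<longleftrightarrow>
     (\<forall>x\<in>S. \<forall>y\<in>S. d x y \<ge> 0 \<and> (d x y = 0 \<longleftrightarrow> x = y) \<and> d x y = d y x) \<and>
     (\<forall>x\<in>S. \<forall>y\<in>S. \<forall>z\<in>S. d x z \<le> d x y + d y z)"

definition left_invariant :: "('a, 'b) monoid_scheme \<Rightarrow> ('a \<Rightarrow> 'a \<Rightarrow> real) \<Rightarrow> bool" where
  "left_invariant G d \<longleftrightarrow>
     (\<forall>g\<in>carrier G. \<forall>x\<in>carrier G. \<forall>y\<in>carrier G. d (g \<otimes>\<^bsub>G\<^esub> x) (g \<otimes>\<^bsub>G\<^esub> y) = d x y)"

definition mbounded :: "'a set \<Rightarrow> ('a \<Rightarrow> 'a \<Rightarrow> real) \<Rightarrow> 'a set \<Rightarrow> bool" where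
  "mbounded S d K \<longleftrightarrow> K \<subseteq> S \<and> (K = {} \<or> (\<exists>x\<in>S. \<exists>r. \<forall>y\<in>K. d x y \<le> r))"

text \<open>Proper metric: closed balls are finite (bounded sets are finite; the group is discrete).\<close>
definition proper_metric :: "'a set \<Rightarrow> ('a \<Rightarrow> 'a \<Rightarrow> real) \<Rightarrow> bool" where
  "proper_metric S d \<longleftrightarrow> (\<forall>x\<in>S. \<forall>r. finite {y\<in>S. d x y \<le> r})"

definition locally_finite_group :: "('a, 'b) monoid_scheme \<Rightarrow> bool" where
  "locally_finite_group G \<longleftrightarrow>
     (\<forall>F. F \<subseteq> carrier G \<and> finite F \<longrightarrow>
        (\<exists>H. subgroup H G \<and> finite H \<and> F \<subseteq> H))"

definition coarsely_clopen :: "'a set \<Rightarrow> ('a \<Rightarrow> 'a \<Rightarrow> real) \<Rightarrow> 'a set \<Rightarrow> bool" where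
  "coarsely_clopen S d A \<longleftrightarrow> A \<subseteq> S \<and>
     (\<forall>r>0. \<exists>K. mbounded S d K \<and>
        \<not> (\<exists>x\<in>A - K. \<exists>y\<in>(S - A) - K. d x y < r))"

definition NCC :: "'a set \<Rightarrow> ('a \<Rightarrow> 'a \<Rightarrow> real) \<Rightarrow> 'a set \<Rightarrow> bool" where
  "NCC S d Y \<longleftrightarrow> coarsely_clopen S d Y \<and> infinite Y \<and> infinite (S - Y)"

definition acts_trivially :: "('a, 'b) monoid_scheme \<Rightarrow> 'a set \<Rightarrow> bool" where
  "acts_trivially G E \<longleftrightarrow>
     (\<forall>g\<in>carrier G. finite ((E - (g <#\<^bsub>G\<^esub> E)) \<union> ((g <#\<^bsub>G\<^esub> E) - E)))"

end

theory Submission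
  imports Defs
begin

locale core = group G for G (structure) +
  fixes T :: "'a set" and lab :: "'a \<Rightarrow> nat" and K :: "'a set"
  assumes T_sub: "T \<subseteq> carrier G" and T_fin: "finite T" and T_inv: "\<And>s. s \<in> T \<Longrightarrow> inv s \<in> T"
  and K_fin: "finite K"
  and edge: "\<And>a s. a \<in> carrier G \<Longrightarrow> s \<in> T \<Longrightarrow> a \<notin> K \<Longrightarrow> a \<otimes> s \<notin> K \<Longrightarrow> lab (a \<otimes> s) = lab a"
  and linv: "\<And>h. h \<in> carrier G \<Longrightarrow> finite {y \<in> carrier G. lab (h \<otimes> y) \<noteq> lab y}"
  and labinf: "\<And>v. v \<in> {1,2,3} \<Longrightarrow> infinite {x\<in>carrier G. lab x = v}"
begin

definition adj where "adj x y \<longleftrightarrow> x \<in> carrier G \<and> (\<exists>s\<in>T. y = x \<otimes> s)"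
definition HH where "HH = {x. adj\<^sup>*\<^sup>* \<one> x}"
definition avoid where "avoid Yb a b \<longleftrightarrow> adj a b \<and> a \<notin> Yb \<and> b \<notin> Yb"
definition ball where "ball n = {x. \<exists>m\<le>n. (adj ^^ m) \<one> x}"

lemma adj_carrier: "adj x y \<Longrightarrow> x \<in> carrier G \<and> y \<in> carrier G"
  unfolding adj_def using T_sub by auto

lemma adj_sym: "adj x y \<Longrightarrow> adj y x"
proof -
  assume "adj x y"
  then obtain s where s: "s \<in> T" "y = x \<otimes> s" "x \<in> carrier G" unfolding adj_def by auto
  have sc: "s \<in> carrier G" using s T_sub by auto
  have "x = y \<otimes> inv s" using s sc by (simp add: m_assoc)
  then show "adj y x" unfolding adj_def using s sc T_inv by auto
qed

lemma adj_left: "g \<in> carrier G \<Longrightarrow> adj x y \<Longrightarrow> adj (g \<otimes> x) (g \<otimes> y)"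
proof -
  assume g: "g \<in> carrier G" and "adj x y"
  then obtain s where s: "s \<in> T" "y = x \<otimes> s" "x \<in> carrier G" unfolding adj_def by auto
  have "g \<otimes> y = (g \<otimes> x) \<otimes> s" using s g T_sub by (auto simp: m_assoc)
  then show ?thesis unfolding adj_def using s g by auto
qed

lemma rt_left: "adj\<^sup>*\<^sup>* x y \<Longrightarrow> g \<in> carrier G \<Longrightarrow> adj\<^sup>*\<^sup>* (g \<otimes> x) (g \<otimes> y)"
proof (induction rule: rtranclp_induct)
  case base then show ?case by simp
next
  case (step y z) then show ?case using adj_left by (meson rtranclp.rtrancl_into_rtrancl)
qed

lemma rt_carrier: "adj\<^sup>*\<^sup>* x y \<Longrightarrow> x \<in> carrier G \<Longrightarrow> y \<in> carrier G"
  by (induction rule: rtranclp_induct) (auto dest: adj_carrier)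

lemma rt_sym: "adj\<^sup>*\<^sup>* x y \<Longrightarrow> adj\<^sup>*\<^sup>* y x"
  by (metis adj_sym sympD sympI symp_rtranclp)

lemma HH_carrier: "HH \<subseteq> carrier G"
  unfolding HH_def using rt_carrier by auto

lemma HH_mult: "x \<in> HH \<Longrightarrow> y \<in> HH \<Longrightarrow> x \<otimes> y \<in> HH"
proof -
  assume x: "x \<in> HH" and y: "y \<in> HH"
  have xc: "x \<in> carrier G" using x HH_carrier by auto
  have "adj\<^sup>*\<^sup>* (x \<otimes> \<one>) (x \<otimes> y)" using y xc rt_left[of "\<one>" y x] unfolding HH_def by auto
  then have "adj\<^sup>*\<^sup>* x (x \<otimes> y)" using xc by simp
  then show ?thesis using x unfolding HH_def by auto
qed

lemma HH_inv: "x \<in> HH \<Longrightarrow> inv x \<in> HH"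
proof -
  assume x: "x \<in> HH"
  have xc: "x \<in> carrier G" using x HH_carrier by auto
  have "adj\<^sup>*\<^sup>* (inv x \<otimes> \<one>) (inv x \<otimes> x)" using x xc rt_left[of "\<one>" x "inv x"] unfolding HH_def by auto
  then have "adj\<^sup>*\<^sup>* (inv x) \<one>" using xc by simp
  then show ?thesis unfolding HH_def using rt_sym by auto
qed

lemma one_HH: "\<one> \<in> HH" unfolding HH_def by simp

lemma T_HH: "T \<subseteq> HH"
proof
  fix s assume s: "s \<in> T"
  then have "adj \<one> s" unfolding adj_def using T_sub by (auto intro!: bexI[of _ s])
  then show "s \<in> HH" unfolding HH_def by auto
qed

lemma subgroup_HH: "subgroup HH G"
  by (rule subgroupI) (use HH_carrier one_HH HH_inv HH_mult in auto)

lemma adj_HH: "adj a b \<Longrightarrow> a \<in> HH \<Longrightarrow> b \<in> HH"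
  unfolding HH_def by auto

lemma coset_path: "x \<in> carrier G \<Longrightarrow> h \<in> HH \<Longrightarrow> adj\<^sup>*\<^sup>* x (x \<otimes> h)"
  using rt_left[of \<one> h x] unfolding HH_def by auto

lemma reach_coset: "adj\<^sup>*\<^sup>* x c \<Longrightarrow> x \<in> carrier G \<Longrightarrow> inv x \<otimes> c \<in> HH"
  using rt_left[of x c "inv x"] unfolding HH_def by auto

lemma const_path: "adj\<^sup>*\<^sup>* a b \<Longrightarrow> (\<And>c. adj\<^sup>*\<^sup>* a c \<Longrightarrow> c \<notin> K) \<Longrightarrow> lab a = lab b"
proof (induction rule: rtranclp_induct)
  case base then show ?case by simp
next
  case (step y z)
  then obtain s where s: "s \<in> T" "z = y \<otimes> s" "y \<in> carrier G" unfolding adj_def by auto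
  have "y \<notin> K" "z \<notin> K" using step(1,2) step.prems by (auto intro: rtranclp.rtrancl_into_rtrancl)
  then show ?case using step s edge by auto
qed

lemma avoid_const:
  assumes "(avoid Yb)\<^sup>*\<^sup>* x z" "\<And>a b. adj a b \<Longrightarrow> a \<in> HH \<Longrightarrow> a \<notin> Yb \<Longrightarrow> b \<notin> Yb \<Longrightarrow> f a = f b" "x \<in> HH"
  shows "f x = f z \<and> z \<in> HH"
  using assms(1)
proof (induction rule: rtranclp_induct)
  case base then show ?case using assms by simp
next
  case (step y z)
  then show ?case using assms(2)[of y z] adj_HH unfolding avoid_def by auto
qed

lemma first_hit: "adj\<^sup>*\<^sup>* x y \<Longrightarrow> x \<notin> Yb \<Longrightarrow> y \<in> Yb \<Longrightarrow>
   \<exists>z w. (avoid Yb)\<^sup>*\<^sup>* x z \<and> adj z w \<and> z \<notin> Yb \<and> w \<in> Yb"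
proof (induction rule: converse_rtranclp_induct)
  case base then show ?case by simp
next
  case (step x a)
  show ?case
  proof (cases "a \<in> Yb")
    case True then show ?thesis using step by blast
  next
    case False
    then obtain z w where "(avoid Yb)\<^sup>*\<^sup>* a z" "adj z w" "z \<notin> Yb" "w \<in> Yb" using step by blast
    moreover have "avoid Yb x a" unfolding avoid_def using step False by auto
    ultimately show ?thesis by (meson converse_rtranclp_into_rtranclp)
  qed
qed

lemma pow_fin: "finite {x. (adj ^^ m) \<one> x}"
proof (induction m)
  case 0 then show ?case by simp
next
  case (Suc m)
  have "{x. (adj ^^ Suc m) \<one> x} \<subseteq> (\<lambda>(y,s). y \<otimes> s) ` ({x. (adj ^^ m) \<one> x} \<times> T)"
    unfolding adj_def by (auto simp: relcompp_apply)
  then show ?case using Suc T_fin finite_subset by blast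
qed

lemma ball_fin: "finite (ball n)"
proof -
  have "ball n = (\<Union>m\<in>{..n}. {x. (adj ^^ m) \<one> x})" unfolding ball_def by auto
  then show ?thesis using pow_fin by simp
qed

lemma ball_HH: "ball n \<subseteq> HH"
  unfolding ball_def HH_def using relpowp_imp_rtranclp by fastforce

lemma one_ball: "\<one> \<in> ball n"
  unfolding ball_def by (rule CollectI, rule exI[of _ 0]) simp

lemma ball_conn_aux: "(adj ^^ m) \<one> x \<Longrightarrow> m \<le> n \<Longrightarrow>
   (\<lambda>a b. adj a b \<and> a \<in> ball n \<and> b \<in> ball n)\<^sup>*\<^sup>* \<one> x"
proof (induction m arbitrary: x)
  case 0 then show ?case by simp
next
  case (Suc m)
  then obtain y where y: "(adj ^^ m) \<one> y" "adj y x" by (auto simp: relcompp_apply)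
  have "(adj ^^ Suc m) \<one> x" using y by (auto simp: relcompp_apply)
  then have "x \<in> ball n" unfolding ball_def using Suc.prems
    by (intro CollectI exI[of _ "Suc m"]) auto
  have "y \<in> ball n" unfolding ball_def using y Suc.prems
    by (intro CollectI exI[of _ m]) auto
  have "(\<lambda>a b. adj a b \<and> a \<in> ball n \<and> b \<in> ball n)\<^sup>*\<^sup>* \<one> y"
    using Suc.IH[OF y(1)] Suc.prems by simp
  moreover have "(\<lambda>a b. adj a b \<and> a \<in> ball n \<and> b \<in> ball n) y x"
    using y(2) \<open>y \<in> ball n\<close> \<open>x \<in> ball n\<close> by simp
  ultimately show ?case by (rule rtranclp.rtrancl_into_rtrancl)
qed

lemma ball_conn: "x \<in> ball n \<Longrightarrow> (\<lambda>a b. adj a b \<and> a \<in> ball n \<and> b \<in> ball n)\<^sup>*\<^sup>* \<one> x"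
proof -
  assume "x \<in> ball n"
  then obtain m where "m \<le> n" "(adj ^^ m) \<one> x" unfolding ball_def by auto
  then show ?thesis using ball_conn_aux by auto
qed

lemma ball_mono: "n \<le> n' \<Longrightarrow> ball n \<subseteq> ball n'"
  unfolding ball_def using le_trans by blast

lemma ball_cover: "finite A \<Longrightarrow> A \<subseteq> HH \<Longrightarrow> \<exists>n. A \<subseteq> ball n"
proof (induction rule: finite_induct)
  case empty then show ?case by simp
next
  case (insert a A)
  then obtain n where n: "A \<subseteq> ball n" by auto
  from insert have "adj\<^sup>*\<^sup>* \<one> a" unfolding HH_def by auto
  then obtain m where "(adj ^^ m) \<one> a" using rtranclp_imp_relpowp by metis
  then have "a \<in> ball (max n m)" unfolding ball_def by (intro CollectI exI[of _ m]) auto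
  moreover have "A \<subseteq> ball (max n m)" using n ball_mono[of n "max n m"] by auto
  ultimately show ?case by auto
qed

lemma labH:
  assumes Hinf: "infinite HH" and v: "v \<in> {1,2,3}"
  shows "infinite {x\<in>HH. lab x = v}"
proof
  assume fin: "finite {x\<in>HH. lab x = v}"
  have finz: "finite {y\<in>HH. lab (z \<otimes> y) = v}" if z: "z \<in> carrier G" for z
  proof -
    have "{y\<in>HH. lab (z \<otimes> y) = v} \<subseteq> {x\<in>HH. lab x = v} \<union> {y \<in> carrier G. lab (z \<otimes> y) \<noteq> lab y}"
      using HH_carrier by auto
    then show ?thesis using fin linv[OF z] finite_subset by blast
  qed
  have sub: "{x\<in>carrier G. lab x = v} \<subseteq> (\<Union>k\<in>K \<inter> carrier G. (\<lambda>y. k \<otimes> y) ` {y\<in>HH. lab (k \<otimes> y) = v})"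
  proof
    fix x assume x: "x \<in> {x\<in>carrier G. lab x = v}"
    then have xc: "x \<in> carrier G" and lx: "lab x = v" by auto
    show "x \<in> (\<Union>k\<in>K \<inter> carrier G. (\<lambda>y. k \<otimes> y) ` {y\<in>HH. lab (k \<otimes> y) = v})"
    proof (cases "\<exists>h\<in>HH. x \<otimes> h \<in> K")
      case True
      then obtain h where h: "h \<in> HH" "x \<otimes> h \<in> K" by auto
      have hc: "h \<in> carrier G" using h HH_carrier by auto
      have e: "(x \<otimes> h) \<otimes> inv h = x" using xc hc by (simp add: m_assoc)
      have "inv h \<in> HH" using h HH_inv by auto
      then show ?thesis using h e lx xc hc by (auto intro!: bexI[of _ "x \<otimes> h"] image_eqI[of _ _ "inv h"])
    next
      case False
      have "\<forall>y\<in>HH. lab (x \<otimes> y) = v"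
      proof
        fix y assume y: "y \<in> HH"
        have "lab x = lab (x \<otimes> y)"
        proof (rule const_path[OF coset_path[OF xc y]])
          fix c assume c: "adj\<^sup>*\<^sup>* x c"
          have cc: "c \<in> carrier G" using rt_carrier[OF c xc] .
          have "inv x \<otimes> c \<in> HH" using reach_coset[OF c xc] .
          moreover have "x \<otimes> (inv x \<otimes> c) = c" using xc cc by (simp add: m_assoc[symmetric])
          ultimately show "c \<notin> K" using False by metis
        qed
        then show "lab (x \<otimes> y) = v" using lx by simp
      qed
      then have "{y\<in>HH. lab (x \<otimes> y) = v} = HH" by auto
      then show ?thesis using finz[OF xc] Hinf by simp
    qed
  qed
  have "finite (\<Union>k\<in>K \<inter> carrier G. (\<lambda>y. k \<otimes> y) ` {y\<in>HH. lab (k \<otimes> y) = v})"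
    using K_fin finz by auto
  then show False using sub labinf[OF v] finite_subset by blast
qed

lemma main_False:
  assumes Hinf: "infinite HH"
  shows False
proof -
  obtain n where Kn: "K \<inter> HH \<subseteq> ball n" using ball_cover[of "K \<inter> HH"] K_fin by auto
  define C where "C = ball n"
  have Cfin: "finite C" unfolding C_def by (rule ball_fin)
  have CH: "C \<subseteq> HH" unfolding C_def by (rule ball_HH)
  have KC: "K \<inter> HH \<subseteq> C" using Kn C_def by simp
  have oneC: "\<one> \<in> C" unfolding C_def by (rule one_ball)
  have Cc: "C \<subseteq> carrier G" using CH HH_carrier by auto
  define Q where "Q = (\<lambda>(c,c'). c' \<otimes> inv c) ` (C \<times> C)"
  have "finite Q" unfolding Q_def using Cfin by auto
  then have "infinite (HH - Q)" using Hinf by auto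
  then obtain g where gH: "g \<in> HH" and gQ: "g \<notin> Q" using infinite_imp_nonempty by blast
  have gc: "g \<in> carrier G" using gH HH_carrier by auto
  have gC: "g \<otimes> c \<notin> C" if c: "c \<in> C" for c
  proof
    assume c': "g \<otimes> c \<in> C"
    have cc: "c \<in> carrier G" using c Cc by auto
    have "g = (g \<otimes> c) \<otimes> inv c" using gc cc by (simp add: m_assoc)
    then have "g \<in> Q" unfolding Q_def using c c' by (auto intro!: image_eqI[of _ _ "(c, g \<otimes> c)"])
    then show False using gQ by simp
  qed
  define C' where "C' = (\<lambda>c. g \<otimes> c) ` C"
  have disj: "C \<inter> C' = {}" unfolding C'_def using gC by auto
  have C'fin: "finite C'" unfolding C'_def using Cfin by simp
  define L where "L = (\<lambda>x. lab (inv g \<otimes> x))"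
  have edgeH: "lab a = lab b" if ab: "adj a b" "a \<in> HH" "a \<notin> C" "b \<notin> C" for a b
  proof -
    have bH: "b \<in> HH" using adj_HH ab by auto
    have "a \<notin> K" "b \<notin> K" using KC ab bH by auto
    moreover obtain s where s: "s \<in> T" "b = a \<otimes> s" "a \<in> carrier G" using ab(1) unfolding adj_def by auto
    ultimately show ?thesis using edge by auto
  qed
  have edgeL: "L a = L b" if ab: "adj a b" "a \<in> HH" "a \<notin> C'" "b \<notin> C'" for a b
  proof -
    have bc: "b \<in> carrier G" using adj_carrier ab by auto
    have ac: "a \<in> carrier G" using adj_carrier ab by auto
    have ig: "inv g \<in> carrier G" using gc by simp
    have a1: "adj (inv g \<otimes> a) (inv g \<otimes> b)" using adj_left[OF ig ab(1)] .
    have a2: "inv g \<otimes> a \<in> HH" using HH_mult HH_inv gH ab(2) by auto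
    have a3: "inv g \<otimes> a \<notin> C"
    proof
      assume "inv g \<otimes> a \<in> C"
      moreover have "g \<otimes> (inv g \<otimes> a) = a" using gc ac by (simp add: m_assoc[symmetric])
      ultimately have "a \<in> C'" unfolding C'_def by (metis image_eqI)
      then show False using ab by simp
    qed
    have a4: "inv g \<otimes> b \<notin> C"
    proof
      assume "inv g \<otimes> b \<in> C"
      moreover have "g \<otimes> (inv g \<otimes> b) = b" using gc bc by (simp add: m_assoc[symmetric])
      ultimately have "b \<in> C'" unfolding C'_def by (metis image_eqI)
      then show False using ab by simp
    qed
    show ?thesis unfolding L_def using edgeH[OF a1 a2 a3 a4] .
  qed
  have LC: "L c = L \<one>" if c: "c \<in> C" for c
  proof -
    have "(\<lambda>a b. adj a b \<and> a \<in> C \<and> b \<in> C)\<^sup>*\<^sup>* \<one> c" using ball_conn c unfolding C_def by auto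
    then show ?thesis
    proof (induction rule: rtranclp_induct)
      case base then show ?case by simp
    next
      case (step y z)
      then have "L y = L z" using edgeL[of y z] disj CH by auto
      then show ?case using step by simp
    qed
  qed
  have labC': "lab (g \<otimes> c) = lab g" if c: "c \<in> C" for c
  proof -
    have "(\<lambda>a b. adj a b \<and> a \<in> C \<and> b \<in> C)\<^sup>*\<^sup>* \<one> c" using ball_conn c unfolding C_def by auto
    then have "lab (g \<otimes> c) = lab (g \<otimes> \<one>)"
    proof (induction rule: rtranclp_induct)
      case base then show ?case by simp
    next
      case (step y z)
      have "adj (g \<otimes> y) (g \<otimes> z)" using adj_left[OF gc] step by auto
      moreover have "g \<otimes> y \<in> HH" using HH_mult gH CH step by auto
      ultimately have "lab (g \<otimes> y) = lab (g \<otimes> z)" using edgeH gC step by auto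
      then show ?case using step by simp
    qed
    then show ?thesis using gc by simp
  qed
  define D where "D = {y \<in> carrier G. lab (inv g \<otimes> y) \<noteq> lab y}"
  have Dfin: "finite D" unfolding D_def using linv gc by simp
  have key: "lab x = L \<one> \<or> lab x = lab g" if x: "x \<in> HH" "x \<notin> C" "x \<notin> C'" "x \<notin> D" for x
  proof -
    have xc: "x \<in> carrier G" using x HH_carrier by auto
    have "adj\<^sup>*\<^sup>* x \<one>" using x rt_sym unfolding HH_def by auto
    then obtain z w where zw: "(avoid (C \<union> C'))\<^sup>*\<^sup>* x z" "adj z w" "z \<notin> C \<union> C'" "w \<in> C \<union> C'"
      using first_hit[of x \<one> "C \<union> C'"] x oneC by auto
    have l1: "lab x = lab z \<and> z \<in> HH"
      by (rule avoid_const[OF zw(1) _ x(1)]) (use edgeH in auto)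
    have l2: "L x = L z"
      using avoid_const[OF zw(1) _ x(1), of L] edgeL by auto
    have lx: "lab x = L x" unfolding L_def using x xc D_def by auto
    show ?thesis
    proof (cases "w \<in> C")
      case True
      then have "w \<notin> C'" using disj by auto
      then have "L z = L w" using edgeL[OF zw(2)] l1 zw(3) by auto
      then show ?thesis using LC[OF True] lx l2 by simp
    next
      case False
      then have wC': "w \<in> C'" using zw by auto
      then obtain c where c: "c \<in> C" "w = g \<otimes> c" unfolding C'_def by auto
      have "lab z = lab w" using edgeH[OF zw(2)] l1 zw(3) False by auto
      then show ?thesis using labC'[OF c(1)] c l1 by simp
    qed
  qed
  obtain v :: nat where v: "v \<in> {1,2,3}" "v \<noteq> L \<one>" "v \<noteq> lab g"
  proof -
    have "(1 \<noteq> L \<one> \<and> 1 \<noteq> lab g) \<or> (2 \<noteq> L \<one> \<and> 2 \<noteq> lab g) \<or> (3 \<noteq> L \<one> \<and> (3::nat) \<noteq> lab g)" by linarith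
    then have "\<exists>v::nat. v \<in> {1,2,3} \<and> v \<noteq> L \<one> \<and> v \<noteq> lab g" by blast
    then show ?thesis using that by blast
  qed
  have "infinite ({x\<in>HH. lab x = v} - (C \<union> C' \<union> D))"
    using labH[OF Hinf v(1)] Cfin C'fin Dfin by auto
  then obtain x where "x \<in> {x\<in>HH. lab x = v} - (C \<union> C' \<union> D)" using infinite_imp_nonempty by blast
  then show False using key[of x] v by auto
qed

end

context group begin

lemma clopen_K:
  assumes met: "metric_on (carrier G) d" and prp: "proper_metric (carrier G) d"
    and li: "left_invariant G d" and cc: "coarsely_clopen (carrier G) d E"
    and T: "T \<subseteq> carrier G" "finite T"
  shows "\<exists>K. finite K \<and> (\<forall>a\<in>carrier G. \<forall>s\<in>T. a \<notin> K \<longrightarrow> a \<otimes> s \<notin> K \<longrightarrow> (a \<otimes> s \<in> E \<longleftrightarrow> a \<in> E))"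
proof -
  define \<rho> where "\<rho> = (\<Sum>s\<in>T. d \<one> s)"
  have dnn: "\<And>x y. x \<in> carrier G \<Longrightarrow> y \<in> carrier G \<Longrightarrow> d x y \<ge> 0 \<and> d x y = d y x"
    using met unfolding metric_on_def by auto
  have drho: "d \<one> s \<le> \<rho>" if "s \<in> T" for s
    unfolding \<rho>_def using that T by (intro member_le_sum) (auto simp: dnn)
  have dstep: "d a (a \<otimes> s) \<le> \<rho>" if "a \<in> carrier G" "s \<in> T" for a s
  proof -
    have "\<forall>g\<in>carrier G. \<forall>x\<in>carrier G. \<forall>y\<in>carrier G. d (g \<otimes> x) (g \<otimes> y) = d x y"
      using li unfolding left_invariant_def by auto
    then have "d (a \<otimes> \<one>) (a \<otimes> s) = d \<one> s" using that T by (meson one_closed subsetD)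
    then show ?thesis using drho[OF that(2)] that by simp
  qed
  have "\<rho> \<ge> 0" unfolding \<rho>_def using T dnn by (intro sum_nonneg) auto
  then have "\<rho> + 1 > 0" by linarith
  then obtain K where K: "mbounded (carrier G) d K"
    and nj: "\<not> (\<exists>x\<in>E - K. \<exists>y\<in>(carrier G - E) - K. d x y < \<rho> + 1)"
    using cc unfolding coarsely_clopen_def by blast
  have Kfin: "finite K"
  proof -
    have "K \<subseteq> carrier G" "K = {} \<or> (\<exists>x\<in>carrier G. \<exists>r. \<forall>y\<in>K. d x y \<le> r)"
      using K unfolding mbounded_def by auto
    then show ?thesis
    proof (elim disjE)
      assume "K \<subseteq> carrier G" "\<exists>x\<in>carrier G. \<exists>r. \<forall>y\<in>K. d x y \<le> r"
      then obtain x r where "x \<in> carrier G" "K \<subseteq> {y\<in>carrier G. d x y \<le> r}" by auto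
      then show ?thesis using prp unfolding proper_metric_def by (meson finite_subset)
    qed auto
  qed
  have "\<forall>a\<in>carrier G. \<forall>s\<in>T. a \<notin> K \<longrightarrow> a \<otimes> s \<notin> K \<longrightarrow> (a \<otimes> s \<in> E \<longleftrightarrow> a \<in> E)"
  proof (intro ballI impI)
    fix a s assume a: "a \<in> carrier G" and s: "s \<in> T" and aK: "a \<notin> K" and asK: "a \<otimes> s \<notin> K"
    have sc: "s \<in> carrier G" using s T by auto
    have asc: "a \<otimes> s \<in> carrier G" using a sc by simp
    have dd: "d a (a \<otimes> s) < \<rho> + 1" "d (a \<otimes> s) a < \<rho> + 1"
      using dstep[OF a s] dnn[OF a asc] by auto
    show "a \<otimes> s \<in> E \<longleftrightarrow> a \<in> E"
    proof
      assume h: "a \<otimes> s \<in> E"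
      show "a \<in> E"
      proof (rule ccontr)
        assume "a \<notin> E"
        then have "a \<otimes> s \<in> E - K" "a \<in> (carrier G - E) - K" using h aK asK a by auto
        then show False using nj dd(2) by blast
      qed
    next
      assume h: "a \<in> E"
      show "a \<otimes> s \<in> E"
      proof (rule ccontr)
        assume "a \<otimes> s \<notin> E"
        then have "a \<in> E - K" "a \<otimes> s \<in> (carrier G - E) - K" using h aK asK asc by auto
        then show False using nj dd(1) by blast
      qed
    qed
  qed
  then show ?thesis using Kfin by blast
qed

lemma lcoset_mem:
  assumes "h \<in> carrier G" "y \<in> carrier G" "E \<subseteq> carrier G"
  shows "h \<otimes> y \<in> h <# E \<longleftrightarrow> y \<in> E"
  unfolding l_coset_def using assms by auto

lemma two_trivial_False:
  assumes met: "metric_on (carrier G) d" and prp: "proper_metric (carrier G) d"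
    and li: "left_invariant G d" and nlf: "\<not> locally_finite_group G"
    and N1: "NCC (carrier G) d E" and N2: "NCC (carrier G) d E'" and N3: "NCC (carrier G) d E''"
    and d12: "E \<inter> E' = {}" and d13: "E \<inter> E'' = {}" and d23: "E' \<inter> E'' = {}"
    and t1: "acts_trivially G E" and t2: "acts_trivially G E'"
  shows False
proof -
  obtain F where F: "F \<subseteq> carrier G" "finite F" and noH: "\<not> (\<exists>H. subgroup H G \<and> finite H \<and> F \<subseteq> H)"
    using nlf unfolding locally_finite_group_def by blast
  define T where "T = F \<union> (\<lambda>x. inv x) ` F"
  have Tsub: "T \<subseteq> carrier G" unfolding T_def using F by auto
  have Tfin: "finite T" unfolding T_def using F by auto
  have Tinv: "inv s \<in> T" if "s \<in> T" for s
    using that F unfolding T_def by (auto simp: subsetD)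
  have cc1: "coarsely_clopen (carrier G) d E" and cc2: "coarsely_clopen (carrier G) d E'"
    using N1 N2 unfolding NCC_def by auto
  have Ec: "E \<subseteq> carrier G" "E' \<subseteq> carrier G" "E'' \<subseteq> carrier G"
    using N1 N2 N3 unfolding NCC_def coarsely_clopen_def by auto
  obtain K1 where K1: "finite K1" "\<forall>a\<in>carrier G. \<forall>s\<in>T. a \<notin> K1 \<longrightarrow> a \<otimes> s \<notin> K1 \<longrightarrow> (a \<otimes> s \<in> E \<longleftrightarrow> a \<in> E)"
    using clopen_K[OF met prp li cc1 Tsub Tfin] by blast
  obtain K2 where K2: "finite K2" "\<forall>a\<in>carrier G. \<forall>s\<in>T. a \<notin> K2 \<longrightarrow> a \<otimes> s \<notin> K2 \<longrightarrow> (a \<otimes> s \<in> E' \<longleftrightarrow> a \<in> E')"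
    using clopen_K[OF met prp li cc2 Tsub Tfin] by blast
  define lab :: "'a \<Rightarrow> nat" where "lab = (\<lambda>x. if x \<in> E then 1 else if x \<in> E' then 2 else 3)"
  have linv: "finite {y \<in> carrier G. lab (h \<otimes> y) \<noteq> lab y}" if h: "h \<in> carrier G" for h
  proof -
    define S1 where "S1 = (E - (h <# E)) \<union> ((h <# E) - E)"
    define S2 where "S2 = (E' - (h <# E')) \<union> ((h <# E') - E')"
    have fS: "finite (S1 \<union> S2)" using t1 t2 h unfolding acts_trivially_def S1_def S2_def by auto
    have "{y \<in> carrier G. lab (h \<otimes> y) \<noteq> lab y} \<subseteq> (\<lambda>z. inv h \<otimes> z) ` (S1 \<union> S2)"
    proof
      fix y assume y: "y \<in> {y \<in> carrier G. lab (h \<otimes> y) \<noteq> lab y}"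
      then have yc: "y \<in> carrier G" by auto
      have m1: "h \<otimes> y \<in> h <# E \<longleftrightarrow> y \<in> E" using lcoset_mem[OF h yc Ec(1)] .
      have m2: "h \<otimes> y \<in> h <# E' \<longleftrightarrow> y \<in> E'" using lcoset_mem[OF h yc Ec(2)] .
      have "h \<otimes> y \<in> S1 \<union> S2" using y m1 m2 unfolding S1_def S2_def lab_def by (auto split: if_splits)
      moreover have "y = inv h \<otimes> (h \<otimes> y)" using h yc by (simp add: m_assoc[symmetric])
      ultimately show "y \<in> (\<lambda>z. inv h \<otimes> z) ` (S1 \<union> S2)" by blast
    qed
    then show ?thesis using fS finite_subset by blast
  qed
  have labinf: "infinite {x\<in>carrier G. lab x = v}" if v: "v \<in> {1,2,3}" for v
  proof -
    have i1: "infinite E" "infinite E'" "infinite E''" using N1 N2 N3 unfolding NCC_def by auto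
    have "v = 1 \<or> v = 2 \<or> v = 3" using v by auto
    then show ?thesis
    proof (elim disjE)
      assume "v = 1"
      then have "{x\<in>carrier G. lab x = v} = E" using Ec unfolding lab_def by auto
      then show ?thesis using i1 by simp
    next
      assume "v = 2"
      then have "{x\<in>carrier G. lab x = v} = E'" using Ec d12 unfolding lab_def by auto
      then show ?thesis using i1 by simp
    next
      assume "v = 3"
      then have "E'' \<subseteq> {x\<in>carrier G. lab x = v}" using Ec d13 d23 unfolding lab_def by auto
      then show ?thesis using i1 finite_subset by blast
    qed
  qed
  interpret c: core G T lab "K1 \<union> K2"
  proof (intro core.intro core_axioms.intro)
    show "group G" by (rule is_group)
    show "T \<subseteq> carrier G" "finite T" "finite (K1 \<union> K2)" using Tsub Tfin K1 K2 by auto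
    show "\<And>s. s \<in> T \<Longrightarrow> inv s \<in> T" by (rule Tinv)
    show "\<And>a s. a \<in> carrier G \<Longrightarrow> s \<in> T \<Longrightarrow> a \<notin> K1 \<union> K2 \<Longrightarrow> a \<otimes> s \<notin> K1 \<union> K2 \<Longrightarrow> lab (a \<otimes> s) = lab a"
    proof -
      fix a s assume a: "a \<in> carrier G" "s \<in> T" "a \<notin> K1 \<union> K2" "a \<otimes> s \<notin> K1 \<union> K2"
      have "a \<otimes> s \<in> E \<longleftrightarrow> a \<in> E" using K1(2) a by auto
      moreover have "a \<otimes> s \<in> E' \<longleftrightarrow> a \<in> E'" using K2(2) a by auto
      ultimately show "lab (a \<otimes> s) = lab a" unfolding lab_def by simp
    qed
    show "\<And>h. h \<in> carrier G \<Longrightarrow> finite {y \<in> carrier G. lab (h \<otimes> y) \<noteq> lab y}" by (rule linv)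
    show "\<And>v. v \<in> {1,2,3} \<Longrightarrow> infinite {x\<in>carrier G. lab x = v}" by (rule labinf)
  qed
  have "infinite c.HH"
  proof
    assume "finite c.HH"
    moreover have "subgroup c.HH G" by (rule c.subgroup_HH)
    moreover have "F \<subseteq> c.HH" using c.T_HH unfolding T_def by auto
    ultimately show False using noH by blast
  qed
  then show False by (rule c.main_False)
qed

end

theorem lemma5p9:
  fixes G :: "('a, 'b) monoid_scheme" and d :: "'a \<Rightarrow> 'a \<Rightarrow> real"
    and E1 E2 E3 :: "'a set"
  assumes "group G"
    and "countable (carrier G)"
    and "metric_on (carrier G) d"
    and "proper_metric (carrier G) d"
    and "left_invariant G d"
    and "\<not> locally_finite_group G"
    and "NCC (carrier G) d E1" and "NCC (carrier G) d E2" and "NCC (carrier G) d E3"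
    and "E1 \<inter> E2 = {}" and "E1 \<inter> E3 = {}" and "E2 \<inter> E3 = {}"
  shows "\<not> (acts_trivially G E1 \<and> acts_trivially G E2)
       \<and> \<not> (acts_trivially G E1 \<and> acts_trivially G E3)
       \<and> \<not> (acts_trivially G E2 \<and> acts_trivially G E3)"
proof -
  have i21: "E2 \<inter> E1 = {}" and i31: "E3 \<inter> E1 = {}" and i32: "E3 \<inter> E2 = {}"
    using assms(10,11,12) by auto
  note T = group.two_trivial_False[OF assms(1)]
  show ?thesis
  proof (intro conjI notI; elim conjE)
    assume "acts_trivially G E1" "acts_trivially G E2"
    then show False using T[OF assms(3,4,5,6,7,8,9,10,11,12)] by blast
  next
    assume "acts_trivially G E1" "acts_trivially G E3"
    then show False using T[OF assms(3,4,5,6,7,9,8,11,10) i32] by blast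
  next
    assume "acts_trivially G E2" "acts_trivially G E3"
    then show False using T[OF assms(3,4,5,6,8,9,7,12) i21 i31] by blast
  qed
qed

end
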